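(* Let $V\subseteq\mathcal{V}$ be a set of interpretations and consider $\sigma\in\{\mathrm{adm},\mathrm{com},\mathrm{mod}\}$. There is an ADF $D$ such that $\sigma(D)=V$ if and only if there is a $\sigma$-characterization for $V$.
   Context: Let $A$ be a fixed finite set of statements. An interpretation is a mapping $v:A\to\{\mathbf{t},\mathbf{f},\mathbf{u}\}$; $\mathcal{V}$ is the set of all interpretations and $\mathcal{V}_2$ the set of two-valued ones. The information ordering is $\mathbf{u}<_i\mathbf{t}$, $\mathbf{u}<_i\mathbf{f}$, extended pointwise. For $v\in\mathcal{V}$, $[v]_2$ is the set of two-valued interpretations $w$ with $v\leq_i w$. An ADF is $D=(A,L,C)$ where each statement $a$ has an acceptance formula $\varphi_a$ over its parents. The operator $\Gamma_D$ maps $v$ to the interpretation assigning to each $a$ the greatest lower bound w.r.t. $\leq_i$ (consensus: $\mathbf{t}$ if all are $\mathbf{t}$, $\mathbf{f}$ if all are $\mathbf{f}$, otherwise $\mathbf{u}$) of $\{w(\varphi_a)\mid w\in[v]_2\}$. $v$ is admissible iff $v\leq_i\Gamma_D(v)$, complete iff $\Gamma_D(v)=v$, a two-valued model iff it is two-valued and $\Gamma_D(v)=v$; these sets are $\mathrm{adm}(D),\mathrm{com}(D),\mathrm{mod}(D)$. For $f:\mathcal{V}_2\to\mathcal{V}_2$: - $f$ is an adm-characterization of $V$ iff for each $v\in\mathcal{V}$: $v\in V$ iff for every $a\in A$, $v(a)\neq\mathbf{u}$ implies $f(v_2)(a)=v(a)$ for all $v_2\in[v]_2$. - $f$ is a com-characterization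 of $V$ iff for each $v\in\mathcal{V}$: $v\in V$ iff for every $a\in A$, $v(a)\neq\mathbf{u}$ implies $f(v_2)(a)=v(a)$ for all $v_2\in[v]_2$, and $v(a)=\mathbf{u}$ implies $f(v_2')(a)=\mathbf{t}$ and $f(v_2'')(a)=\mathbf{f}$ for some $v_2',v_2''\in[v]_2$. - $f$ is a mod-characterization of $V$ iff $V\subseteq\mathcal{V}_2$ and for each $v\in\mathcal{V}_2$, $v\in V$ iff $f(v)=v$. *)

theory Defs
  imports Main
begin

(* The fixed finite set A of statements is the finite type 'a (A = UNIV). *)

datatype tv = TT | FF | UU

type_synonym 'a interp = "'a \<Rightarrow> tv"

definition info_le_tv :: "tv \<Rightarrow> tv \<Rightarrow> bool" where
  "info_le_tv x y \<longleftrightarrow> x = UU \<or> x = y"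

definition info_le :: "'a interp \<Rightarrow> 'a interp \<Rightarrow> bool" where
  "info_le v w \<longleftrightarrow> (\<forall>a. info_le_tv (v a) (w a))"

definition two_valued :: "'a interp set" where
  "two_valued = {v. \<forall>a. v a \<noteq> UU}"

definition completions :: "'a interp \<Rightarrow> 'a interp set" where
  "completions v = {w \<in> two_valued. info_le v w}"

datatype 'a formula = Atom 'a | Top | Bot | Neg "'a formula"
  | Conj "'a formula" "'a formula" | Disj "'a formula" "'a formula"
  | Impl "'a formula" "'a formula"

fun atoms :: "'a formula \<Rightarrow> 'a set" where
  "atoms (Atom a) = {a}"
| "atoms Top = {}"
| "atoms Bot = {}"
| "atoms (Neg p) = atoms p"
| "atoms (Conj p q) = atoms p \<union> atoms q"
| "atoms (Disj p q) = atoms p \<union> atoms q"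
| "atoms (Impl p q) = atoms p \<union> atoms q"

(* w(phi) for a two-valued interpretation w *)
fun eval :: "'a interp \<Rightarrow> 'a formula \<Rightarrow> tv" where
  "eval w (Atom a) = w a"
| "eval w Top = TT"
| "eval w Bot = FF"
| "eval w (Neg p) = (if eval w p = TT then FF else TT)"
| "eval w (Conj p q) = (if eval w p = TT \<and> eval w q = TT then TT else FF)"
| "eval w (Disj p q) = (if eval w p = TT \<or> eval w q = TT then TT else FF)"
| "eval w (Impl p q) = (if eval w p = TT \<longrightarrow> eval w q = TT then TT else FF)"

(* ADF D = (A, L, C): statements A = UNIV :: 'a set, links L, acceptance formulas *)
record 'a adf =
  links :: "('a \<times> 'a) set"
  acc :: "'a \<Rightarrow> 'a formula"

definition parents :: "'a adf \<Rightarrow> 'a \<Rightarrow> 'a set" where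
  "parents D a = {b. (b, a) \<in> links D}"

definition wf_adf :: "'a adf \<Rightarrow> bool" where
  "wf_adf D \<longleftrightarrow> (\<forall>a. atoms (acc D a) \<subseteq> parents D a)"

(* greatest lower bound w.r.t. <=_i (consensus) *)
definition consensus :: "tv set \<Rightarrow> tv" where
  "consensus S = (if (\<forall>x\<in>S. x = TT) then TT else if (\<forall>x\<in>S. x = FF) then FF else UU)"

definition Gamma :: "'a adf \<Rightarrow> 'a interp \<Rightarrow> 'a interp" where
  "Gamma D v = (\<lambda>a. consensus {eval w (acc D a) | w. w \<in> completions v})"

definition adm :: "'a adf \<Rightarrow> 'a interp set" where
  "adm D = {v. info_le v (Gamma D v)}"

definition com :: "'a adf \<Rightarrow> 'a interp set" where
  "com D = {v. Gamma D v = v}"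

definition mdl :: "'a adf \<Rightarrow> 'a interp set" where
  "mdl D = {v \<in> two_valued. Gamma D v = v}"

datatype sem = Adm | Com | Mod

fun sem_of :: "sem \<Rightarrow> 'a adf \<Rightarrow> 'a interp set" where
  "sem_of Adm D = adm D"
| "sem_of Com D = com D"
| "sem_of Mod D = mdl D"

(* f : V_2 \<rightarrow> V_2 (values outside V_2 are irrelevant) *)
definition maps_V2 :: "('a interp \<Rightarrow> 'a interp) \<Rightarrow> bool" where
  "maps_V2 f \<longleftrightarrow> (\<forall>w\<in>two_valued. f w \<in> two_valued)"

definition adm_char :: "('a interp \<Rightarrow> 'a interp) \<Rightarrow> 'a interp set \<Rightarrow> bool" where
  "adm_char f V \<longleftrightarrow> maps_V2 f \<and> (\<forall>v. v \<in> V \<longleftrightarrow>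
     (\<forall>a. v a \<noteq> UU \<longrightarrow> (\<forall>v2\<in>completions v. f v2 a = v a)))"

definition com_char :: "('a interp \<Rightarrow> 'a interp) \<Rightarrow> 'a interp set \<Rightarrow> bool" where
  "com_char f V \<longleftrightarrow> maps_V2 f \<and> (\<forall>v. v \<in> V \<longleftrightarrow>
     (\<forall>a. (v a \<noteq> UU \<longrightarrow> (\<forall>v2\<in>completions v. f v2 a = v a)) \<and>
          (v a = UU \<longrightarrow> (\<exists>v2'\<in>completions v. f v2' a = TT) \<and>
                          (\<exists>v2''\<in>completions v. f v2'' a = FF))))"

definition mod_char :: "('a interp \<Rightarrow> 'a interp) \<Rightarrow> 'a interp set \<Rightarrow> bool" where
  "mod_char f V \<longleftrightarrow> maps_V2 f \<and> V \<subseteq> two_valued \<and>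
     (\<forall>v\<in>two_valued. v \<in> V \<longleftrightarrow> f v = v)"

fun sem_char :: "sem \<Rightarrow> ('a interp \<Rightarrow> 'a interp) \<Rightarrow> 'a interp set \<Rightarrow> bool" where
  "sem_char Adm f V = adm_char f V"
| "sem_char Com f V = com_char f V"
| "sem_char Mod f V = mod_char f V"

end

theory Submission
  imports Defs
begin

instantiation tv :: finite
begin
instance proof
  have "(UNIV :: tv set) = {TT, FF, UU}" by (auto intro: tv.exhaust)
  then show "finite (UNIV :: tv set)" by (metis finite.emptyI finite_insert)
qed
end

lemma cons_TT: "consensus S = TT \<longleftrightarrow> (\<forall>x\<in>S. x = TT)"
  by (auto simp: consensus_def)

lemma cons_FF: "S \<noteq> {} \<Longrightarrow> consensus S = FF \<longleftrightarrow> (\<forall>x\<in>S. x = FF)"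
  by (auto simp: consensus_def)

lemma cons_UU: "consensus S = UU \<longleftrightarrow> (\<exists>x\<in>S. x \<noteq> TT) \<and> (\<exists>x\<in>S. x \<noteq> FF)"
  by (auto simp: consensus_def)

lemma completions_ne: "\<exists>w. w \<in> completions v"
  by (rule exI[of _ "\<lambda>a. if v a = UU then TT else v a"])
     (auto simp: completions_def two_valued_def info_le_def info_le_tv_def)

lemma completions_two: "w \<in> two_valued \<Longrightarrow> completions w = {w}"
  by (auto simp: completions_def two_valued_def info_le_def info_le_tv_def fun_eq_iff)

lemma tv_cases2: "x \<noteq> UU \<Longrightarrow> x = TT \<or> x = FF"
  by (cases x) auto

locale ch =
  fixes D :: "'a adf" and f :: "'a interp \<Rightarrow> 'a interp"
  assumes H: "\<And>w a. w \<in> two_valued \<Longrightarrow> eval w (acc D a) = f w a"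
    and M: "maps_V2 f"
begin

lemma fval: "w \<in> completions v \<Longrightarrow> f w a = TT \<or> f w a = FF"
proof -
  assume "w \<in> completions v"
  then have "f w a \<noteq> UU" using M by (auto simp: maps_V2_def completions_def two_valued_def)
  then show ?thesis by (rule tv_cases2)
qed

lemma G: "Gamma D v a = consensus {f w a | w. w \<in> completions v}"
proof -
  have e: "\<And>w. w \<in> completions v \<Longrightarrow> eval w (acc D a) = f w a"
    using H by (simp add: completions_def)
  have "{eval w (acc D a) | w. w \<in> completions v} = {f w a | w. w \<in> completions v}"
  proof (rule Collect_cong)
    fix x show "(\<exists>w. x = eval w (acc D a) \<and> w \<in> completions v) = (\<exists>w. x = f w a \<and> w \<in> completions v)"
      using e by metis
  qed
  then show ?thesis by (simp add: Gamma_def)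
qed

lemma Sne: "{f w a | w. w \<in> completions v} \<noteq> {}"
  using completions_ne[of v] by auto

lemma nonUU: "v a \<noteq> UU \<Longrightarrow> (v a = Gamma D v a) \<longleftrightarrow> (\<forall>w\<in>completions v. f w a = v a)"
proof -
  assume "v a \<noteq> UU"
  then consider "v a = TT" | "v a = FF" using tv_cases2 by blast
  then show ?thesis
  proof cases
    case 1
    have "consensus {f w a | w. w \<in> completions v} = TT \<longleftrightarrow> (\<forall>w\<in>completions v. f w a = TT)"
      unfolding cons_TT by blast
    then show ?thesis unfolding G using 1 by auto
  next
    case 2
    have "consensus {f w a | w. w \<in> completions v} = FF \<longleftrightarrow> (\<forall>w\<in>completions v. f w a = FF)"
      using cons_FF[OF Sne] by blast
    then show ?thesis unfolding G using 2 by auto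
  qed
qed

lemma isUU: "(Gamma D v a = UU) \<longleftrightarrow> (\<exists>w\<in>completions v. f w a = TT) \<and> (\<exists>w\<in>completions v. f w a = FF)"
proof -
  have "(Gamma D v a = UU) \<longleftrightarrow> (\<exists>x\<in>{f w a | w. w \<in> completions v}. x \<noteq> TT) \<and> (\<exists>x\<in>{f w a | w. w \<in> completions v}. x \<noteq> FF)"
    unfolding G cons_UU by (rule refl)
  also have "\<dots> \<longleftrightarrow> (\<exists>w\<in>completions v. f w a = TT) \<and> (\<exists>w\<in>completions v. f w a = FF)"
  proof -
    have fv: "(f w a \<noteq> TT) = (f w a = FF)" "(f w a \<noteq> FF) = (f w a = TT)"
      if "w \<in> completions v" for w
      using fval[OF that, of a] by auto
    have A: "(\<exists>x\<in>{f w a | w. w \<in> completions v}. x \<noteq> TT) \<longleftrightarrow> (\<exists>w\<in>completions v. f w a \<noteq> TT)" by blast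
    have B: "(\<exists>x\<in>{f w a | w. w \<in> completions v}. x \<noteq> FF) \<longleftrightarrow> (\<exists>w\<in>completions v. f w a \<noteq> FF)" by blast
    show ?thesis unfolding A B using fv by auto
  qed
  finally show ?thesis .
qed

lemma adm_eq: "adm D = {v. \<forall>a. v a \<noteq> UU \<longrightarrow> (\<forall>v2\<in>completions v. f v2 a = v a)}"
  unfolding adm_def info_le_def info_le_tv_def using nonUU by blast

lemma com_eq: "com D = {v. \<forall>a. (v a \<noteq> UU \<longrightarrow> (\<forall>v2\<in>completions v. f v2 a = v a)) \<and>
          (v a = UU \<longrightarrow> (\<exists>v2'\<in>completions v. f v2' a = TT) \<and>
                          (\<exists>v2''\<in>completions v. f v2'' a = FF))}"
proof -
  have "Gamma D v = v \<longleftrightarrow> (\<forall>a. v a = Gamma D v a)" for v by (auto simp: fun_eq_iff)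
  moreover have "(v a = Gamma D v a) \<longleftrightarrow> ((v a \<noteq> UU \<longrightarrow> (\<forall>v2\<in>completions v. f v2 a = v a)) \<and>
          (v a = UU \<longrightarrow> (\<exists>v2'\<in>completions v. f v2' a = TT) \<and>
                          (\<exists>v2''\<in>completions v. f v2'' a = FF)))" for v a
  proof (cases "v a = UU")
    case True
    then show ?thesis using isUU[of v a] by auto
  next
    case False
    then show ?thesis using nonUU[of v a] by auto
  qed
  ultimately show ?thesis unfolding com_def by auto
qed

lemma mdl_eq: "mdl D = {v \<in> two_valued. f v = v}"
proof -
  have "Gamma D v = f v" if v: "v \<in> two_valued" for v
  proof
    fix a
    have "{f w a | w. w \<in> completions v} = {f v a}" using completions_two[OF v] by simp
    moreover have "f v a = TT \<or> f v a = FF" using fval[of v v a] completions_two[OF v] by simp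
    ultimately show "Gamma D v a = f v a" unfolding G consensus_def by auto
  qed
  then show ?thesis unfolding mdl_def by auto
qed

end

lemma eval_two: "w \<in> two_valued \<Longrightarrow> eval w p \<noteq> UU"
  by (induction p) (auto simp: two_valued_def)

definition lit :: "'a interp \<Rightarrow> 'a \<Rightarrow> 'a formula" where
  "lit w b = (if w b = TT then Atom b else Neg (Atom b))"

definition chf :: "'a list \<Rightarrow> 'a interp \<Rightarrow> 'a formula" where
  "chf xs w = foldr (\<lambda>b p. Conj (lit w b) p) xs Top"

definition dis :: "'a formula list \<Rightarrow> 'a formula" where
  "dis ps = foldr Disj ps Bot"

lemma eval_chf: "eval u (chf xs w) = TT \<longleftrightarrow> (\<forall>b\<in>set xs. eval u (lit w b) = TT)"
  unfolding chf_def by (induction xs) auto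

lemma eval_dis: "eval u (dis ps) = TT \<longleftrightarrow> (\<exists>p\<in>set ps. eval u p = TT)"
  unfolding dis_def by (induction ps) auto

lemma eval_lit: "u \<in> two_valued \<Longrightarrow> w \<in> two_valued \<Longrightarrow> eval u (lit w b) = TT \<longleftrightarrow> u b = w b"
  unfolding lit_def two_valued_def
  by (cases "u b"; cases "w b") auto

definition allA :: "'a::finite list" where "allA = (SOME xs. set xs = UNIV)"
definition allI :: "('a::finite interp) list" where "allI = (SOME xs. set xs = UNIV)"

lemma allA: "set (allA :: 'a::finite list) = UNIV"
  unfolding allA_def by (rule someI_ex) (rule finite_list, simp)
lemma allI: "set (allI :: 'a::finite interp list) = UNIV"
  unfolding allI_def by (rule someI_ex) (rule finite_list, simp)

definition mkD :: "('a::finite interp \<Rightarrow> 'a interp) \<Rightarrow> 'a adf" where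
  "mkD f = \<lparr>links = UNIV, acc = (\<lambda>a. dis (map (chf allA) [w \<leftarrow> allI. w \<in> two_valued \<and> f w a = TT]))\<rparr>"

lemma tv_eq: "x \<noteq> UU \<Longrightarrow> y \<noteq> UU \<Longrightarrow> (x = TT \<longleftrightarrow> y = TT) \<Longrightarrow> x = y"
  by (cases x; cases y) auto

lemma mkD_eval:
  assumes M: "maps_V2 f" and w: "w \<in> two_valued"
  shows "eval w (acc (mkD f) a) = f w a"
proof -
  have chf: "eval w (chf allA u) = TT \<longleftrightarrow> u = w" if "u \<in> two_valued" for u
  proof -
    have "eval w (chf allA u) = TT \<longleftrightarrow> (\<forall>b. w b = u b)"
      using eval_lit[OF w that] by (simp add: eval_chf allA)
    then show ?thesis by (auto simp: fun_eq_iff)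
  qed
  have "eval w (acc (mkD f) a) = TT \<longleftrightarrow> (\<exists>u\<in>two_valued. f u a = TT \<and> eval w (chf allA u) = TT)"
    by (simp add: mkD_def eval_dis allI) blast
  also have "\<dots> \<longleftrightarrow> f w a = TT" using chf w by blast
  finally have e: "eval w (acc (mkD f) a) = TT \<longleftrightarrow> f w a = TT" .
  have "f w a \<noteq> UU" using M w by (auto simp: maps_V2_def two_valued_def)
  then show ?thesis using tv_eq[OF eval_two[OF w] _ e] by simp
qed

lemma mkD_ch: "maps_V2 f \<Longrightarrow> ch (mkD f) f"
  by (rule ch.intro) (auto intro: mkD_eval)

lemma mkD_wf: "wf_adf (mkD f)"
  by (auto simp: wf_adf_def mkD_def parents_def)

lemma D_ch: "ch D (\<lambda>w a. eval w (acc D a))"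
  by unfold_locales (auto simp: maps_V2_def two_valued_def eval_two)

lemma L1: "V = {v. P v} \<Longrightarrow> \<forall>v. v \<in> V \<longleftrightarrow> P v" by simp
lemma L2: "\<forall>v. v \<in> V \<longleftrightarrow> P v \<Longrightarrow> {v. P v} = V" by blast

theorem theorem1:
  fixes V :: "('a::finite) interp set" and \<sigma> :: sem
  shows "(\<exists>D :: 'a adf. wf_adf D \<and> sem_of \<sigma> D = V) \<longleftrightarrow> (\<exists>f. sem_char \<sigma> f V)"
proof
  assume "\<exists>D :: 'a adf. wf_adf D \<and> sem_of \<sigma> D = V"
  then obtain D :: "'a adf" where D: "sem_of \<sigma> D = V" by blast
  interpret ch D "\<lambda>w a. eval w (acc D a)" by (rule D_ch)
  have M: "maps_V2 (\<lambda>w a. eval w (acc D a))" by (rule M)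
  have "sem_char \<sigma> (\<lambda>w a. eval w (acc D a)) V"
  proof (cases \<sigma>)
    case Adm
    then have "V = adm D" using D by simp
    note V = this[unfolded adm_eq]
    show ?thesis unfolding Adm sem_char.simps adm_char_def using M L1[OF V] by (rule conjI)
  next
    case Com
    then have "V = com D" using D by simp
    note V = this[unfolded com_eq]
    show ?thesis unfolding Com sem_char.simps com_char_def using M L1[OF V] by (rule conjI)
  next
    case Mod
    then have "V = mdl D" using D by simp
    note V = this[unfolded mdl_eq]
    have "V \<subseteq> two_valued" using V by blast
    moreover have "\<forall>v\<in>two_valued. v \<in> V \<longleftrightarrow> (\<lambda>a. eval v (acc D a)) = v"
      using V by blast
    ultimately show ?thesis unfolding Mod sem_char.simps mod_char_def using M by blast
  qed
  then show "\<exists>f. sem_char \<sigma> f V" by blast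
next
  assume "\<exists>f. sem_char \<sigma> f V"
  then obtain f where f: "sem_char \<sigma> f V" by blast
  have M: "maps_V2 f"
  proof (cases \<sigma>)
    case Adm
    then have "adm_char f V" using f by simp
    then show ?thesis unfolding adm_char_def by (rule conjunct1)
  next
    case Com
    then have "com_char f V" using f by simp
    then show ?thesis unfolding com_char_def by (rule conjunct1)
  next
    case Mod
    then have "mod_char f V" using f by simp
    then show ?thesis unfolding mod_char_def by (rule conjunct1)
  qed
  interpret ch "mkD f" f by (rule mkD_ch[OF M])
  have "sem_of \<sigma> (mkD f) = V"
  proof (cases \<sigma>)
    case Adm
    then have "adm_char f V" using f by simp
    then have fA: "\<forall>v. v \<in> V \<longleftrightarrow> (\<forall>a. v a \<noteq> UU \<longrightarrow> (\<forall>v2\<in>completions v. f v2 a = v a))"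
      unfolding adm_char_def by (rule conjunct2)
    have "adm (mkD f) = V" unfolding adm_eq using L2[OF fA] .
    then show ?thesis using Adm by simp
  next
    case Com
    then have "com_char f V" using f by simp
    then have fA: "\<forall>v. v \<in> V \<longleftrightarrow> (\<forall>a. (v a \<noteq> UU \<longrightarrow> (\<forall>v2\<in>completions v. f v2 a = v a)) \<and>
          (v a = UU \<longrightarrow> (\<exists>v2'\<in>completions v. f v2' a = TT) \<and>
                          (\<exists>v2''\<in>completions v. f v2'' a = FF)))"
      unfolding com_char_def by (rule conjunct2)
    have "com (mkD f) = V" unfolding com_eq using L2[OF fA] .
    then show ?thesis using Com by simp
  next
    case Mod
    then have "mod_char f V" using f by simp
    then have f2: "V \<subseteq> two_valued" "\<forall>v\<in>two_valued. v \<in> V \<longleftrightarrow> f v = v"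
      unfolding mod_char_def by blast+
    have "{v \<in> two_valued. f v = v} = V"
    proof
      show "{v \<in> two_valued. f v = v} \<subseteq> V" using f2(2) by blast
      show "V \<subseteq> {v \<in> two_valued. f v = v}" using f2 by blast
    qed
    then show ?thesis using Mod by (simp add: mdl_eq)
  qed
  then show "\<exists>D :: 'a adf. wf_adf D \<and> sem_of \<sigma> D = V" using mkD_wf by blast
qed

end
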